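(* The collection $\mathbf{FinCorel}^\circ$ of corelations is closed under composition and tensor in $\mathbf{FinCorel}$ and contains all identities and symmetries; hence $\mathbf{FinCorel}^\circ$ is a sub-PROP of $\mathbf{FinCorel}$.
   Context: A PROP is a strict symmetric monoidal category whose monoid of objects is $(\mathbb{N},+,0)$. Write $\underline{m}=\{1,\dots,m\}$. $\mathbf{FinCorel}$ is the PROP whose morphisms $m\to n$ are equivalence relations on $\underline{m}\sqcup\underline{n}$; the composite of $R:m\to n$ and $S:n\to p$ is the restriction to $\underline{m}\sqcup\underline{p}$ of the equivalence relation generated by $R\cup S$ on $\underline{m}\sqcup\underline{n}\sqcup\underline{p}$; tensor is disjoint union with reindexing by addition; the identity at $n$ identifies each input $i$ with output $i$; symmetries are transposition corelations. $\mathbf{FinCorel}^\circ$ consists of those corelations $R:m\to n$ such that (a) every equivalence class of $R$ contains exactly one element of $\underline{m}$ and (b) every equivalence class contains at least one element of $\underline{n}$. *)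

theory Defs
  imports Main
begin

text \<open>Points of the disjoint union m + n: Inl i (input i, 1 <= i <= m) and
  Inr j (output j, 1 <= j <= n).\<close>

type_synonym point = "nat + nat"
type_synonym corel = "(point \<times> point) set"

definition pts :: "nat \<Rightarrow> nat \<Rightarrow> point set" where
  "pts m n = Inl ` {1..m} \<union> Inr ` {1..n}"

definition is_corel :: "nat \<Rightarrow> nat \<Rightarrow> corel \<Rightarrow> bool" where
  "is_corel m n R \<longleftrightarrow> equiv (pts m n) R"

text \<open>Equivalence relation generated by X on the set A (X assumed inside A x A).\<close>
definition gen_equiv :: "'a set \<Rightarrow> ('a \<times> 'a) set \<Rightarrow> ('a \<times> 'a) set" where
  "gen_equiv A X = (X \<union> X\<inverse> \<union> Id_on A)\<^sup>* \<inter> (A \<times> A)"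

text \<open>Points of m + n + p are encoded as pairs (0,i), (1,j), (2,k).\<close>
fun emb_left :: "point \<Rightarrow> nat \<times> nat" where
  "emb_left (Inl i) = (0, i)" | "emb_left (Inr j) = (1, j)"

fun emb_right :: "point \<Rightarrow> nat \<times> nat" where
  "emb_right (Inl j) = (1, j)" | "emb_right (Inr k) = (2, k)"

fun emb_outer :: "point \<Rightarrow> nat \<times> nat" where
  "emb_outer (Inl i) = (0, i)" | "emb_outer (Inr k) = (2, k)"

definition pts3 :: "nat \<Rightarrow> nat \<Rightarrow> nat \<Rightarrow> (nat \<times> nat) set" where
  "pts3 m n p = {0} \<times> {1..m} \<union> {1} \<times> {1..n} \<union> {2} \<times> {1..p}"

definition corel_comp :: "nat \<Rightarrow> nat \<Rightarrow> nat \<Rightarrow> corel \<Rightarrow> corel \<Rightarrow> corel" where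
  "corel_comp m n p R S =
     {(x, y). x \<in> pts m p \<and> y \<in> pts m p \<and>
        (emb_outer x, emb_outer y) \<in>
          gen_equiv (pts3 m n p)
            ((\<lambda>(a, b). (emb_left a, emb_left b)) ` R \<union>
             (\<lambda>(a, b). (emb_right a, emb_right b)) ` S)}"

fun shift :: "nat \<Rightarrow> nat \<Rightarrow> point \<Rightarrow> point" where
  "shift m n (Inl i) = Inl (i + m)" | "shift m n (Inr j) = Inr (j + n)"

definition corel_tensor :: "nat \<Rightarrow> nat \<Rightarrow> corel \<Rightarrow> corel \<Rightarrow> corel" where
  "corel_tensor m n R S = R \<union> (\<lambda>(a, b). (shift m n a, shift m n b)) ` S"

fun idx :: "point \<Rightarrow> nat" where
  "idx (Inl i) = i" | "idx (Inr j) = j"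

definition corel_id :: "nat \<Rightarrow> corel" where
  "corel_id n = {(x, y). x \<in> pts n n \<and> y \<in> pts n n \<and> idx x = idx y}"

text \<open>Symmetry (braiding) corelation m + n -> n + m: input i <= m is joined with
  output n + i, input m + j is joined with output j.\<close>
fun sym_tgt :: "nat \<Rightarrow> nat \<Rightarrow> point \<Rightarrow> point" where
  "sym_tgt m n (Inl i) = (if i \<le> m then Inr (n + i) else Inr (i - m))"
| "sym_tgt m n (Inr j) = Inr j"

definition corel_sym :: "nat \<Rightarrow> nat \<Rightarrow> corel" where
  "corel_sym m n = {(x, y). x \<in> pts (m + n) (n + m) \<and> y \<in> pts (m + n) (n + m) \<and>
                        sym_tgt m n x = sym_tgt m n y}"

definition in_FinCorel_circ :: "nat \<Rightarrow> nat \<Rightarrow> corel \<Rightarrow> bool" where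
  "in_FinCorel_circ m n R \<longleftrightarrow> is_corel m n R \<and>
     (\<forall>C \<in> pts m n // R. card (C \<inter> Inl ` {1..m}) = 1 \<and> C \<inter> Inr ` {1..n} \<noteq> {})"

end

theory Submission
  imports Defs
begin
definition ker :: "point set \<Rightarrow> (point \<Rightarrow> 'b) \<Rightarrow> corel" where
  "ker P h = {(x,y). x \<in> P \<and> y \<in> P \<and> h x = h y}"

lemma equiv_ker: "equiv P (ker P h)"
  unfolding ker_def equiv_def refl_on_def sym_def trans_def by auto

lemma kernel_circ:
  assumes inj: "inj_on h (Inl ` {1..m})"
    and im: "h ` (Inr ` {1..n}) = h ` (Inl ` {1..m})"
  shows "in_FinCorel_circ m n (ker (pts m n) h)"
  unfolding in_FinCorel_circ_def is_corel_def
proof (intro conjI ballI equiv_ker)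
  fix C assume "C \<in> pts m n // ker (pts m n) h"
  then obtain x where x: "x \<in> pts m n" and C: "C = ker (pts m n) h `` {x}"
    by (rule quotientE)
  have "h x \<in> h ` (Inl ` {1..m}) \<union> h ` (Inr ` {1..n})"
    using x unfolding pts_def by blast
  then have hx: "h x \<in> h ` (Inl ` {1..m})" "h x \<in> h ` (Inr ` {1..n})"
    using im by auto
  then obtain i where i: "i \<in> {1..m}" "h (Inl i) = h x" by auto
  have "C \<inter> Inl ` {1..m} = {Inl i}"
  proof
    have "Inl i \<in> pts m n" using i(1) by (simp add: pts_def)
    then show "{Inl i} \<subseteq> C \<inter> Inl ` {1..m}" using x i by (simp add: C ker_def)
    show "C \<inter> Inl ` {1..m} \<subseteq> {Inl i}"
    proof
      fix y assume "y \<in> C \<inter> Inl ` {1..m}"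
      then obtain i' where "y = Inl i'" "i' \<in> {1..m}" "h (Inl i') = h x"
        unfolding C ker_def by auto
      then show "y \<in> {Inl i}" using inj_onD[OF inj, of "Inl i'" "Inl i"] i by simp
    qed
  qed
  then show "card (C \<inter> Inl ` {1..m}) = 1" by simp
  from hx(2) obtain j where "j \<in> {1..n}" "h (Inr j) = h x" by auto
  moreover then have "Inr j \<in> pts m n" by (simp add: pts_def)
  ultimately have "Inr j \<in> C \<inter> Inr ` {1..n}" using x by (simp add: C ker_def)
  then show "C \<inter> Inr ` {1..n} \<noteq> {}" by blast
qed

lemma circ_ker:
  assumes "in_FinCorel_circ m n R"
  shows "\<exists>g. R = ker (pts m n) g \<and> (\<forall>i\<in>{1..m}. g (Inl i) = i)
           \<and> g ` (Inr ` {1..n}) = {1..m} \<and> (\<forall>x\<in>pts m n. g x \<in> {1..m})"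
proof -
  have eq: "equiv (pts m n) R" and cl: "\<And>C. C \<in> pts m n // R \<Longrightarrow>
     card (C \<inter> Inl ` {1..m}) = 1 \<and> C \<inter> Inr ` {1..n} \<noteq> {}"
    using assms unfolding in_FinCorel_circ_def is_corel_def by auto
  have sub: "R \<subseteq> pts m n \<times> pts m n" using eq by (simp add: equiv_def refl_on_def)
  have ex1: "\<exists>!i. i \<in> {1..m} \<and> (x, Inl i) \<in> R" if x: "x \<in> pts m n" for x
  proof -
    have "R `` {x} \<in> pts m n // R" using x by (rule quotientI)
    from cl[OF this] have "card (R `` {x} \<inter> Inl ` {1..m}) = 1" by blast
    then obtain a where a: "R `` {x} \<inter> Inl ` {1..m} = {a}"
      by (rule card_1_singletonE)
    then have "a \<in> Inl ` {1..m}" by blast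
    then obtain i where ai: "a = Inl i" "i \<in> {1..m}" by blast
    show ?thesis
    proof (rule ex1I[of _ i])
      show "i \<in> {1..m} \<and> (x, Inl i) \<in> R" using a ai by blast
      fix i' assume "i' \<in> {1..m} \<and> (x, Inl i') \<in> R"
      then have "Inl i' \<in> R `` {x} \<inter> Inl ` {1..m}" by blast
      then have "Inl i' \<in> {a}" by (simp only: a)
      then show "i' = i" using ai by simp
    qed
  qed
  define g where "g x = (THE i. i \<in> {1..m} \<and> (x, Inl i) \<in> R)" for x
  have gP: "g x \<in> {1..m} \<and> (x, Inl (g x)) \<in> R" if "x \<in> pts m n" for x
    using theI'[OF ex1[OF that]] unfolding g_def by blast
  have gU: "g x = i" if "x \<in> pts m n" "i \<in> {1..m}" "(x, Inl i) \<in> R" for x i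
    using the1_equality[OF ex1[OF that(1)]] that unfolding g_def by blast
  have symR: "sym R" and trR: "trans R" and rfR: "\<And>x. x \<in> pts m n \<Longrightarrow> (x,x) \<in> R"
    using eq by (auto simp: equiv_def refl_on_def)
  have Rk: "R = ker (pts m n) g"
  proof (rule set_eqI, clarify)
    fix x y
    show "((x,y) \<in> R) = ((x,y) \<in> ker (pts m n) g)"
    proof
      assume r: "(x,y) \<in> R"
      then have xy: "x \<in> pts m n" "y \<in> pts m n" using sub by auto
      have "(y, x) \<in> R" using r symR by (rule symD[rotated])
      then have "(y, Inl (g x)) \<in> R" using gP[OF xy(1)] trR by (blast dest: transD)
      then have "g y = g x" using gU[OF xy(2)] gP[OF xy(1)] by blast
      then show "(x,y) \<in> ker (pts m n) g" using xy unfolding ker_def by auto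
    next
      assume "(x,y) \<in> ker (pts m n) g"
      then have xy: "x \<in> pts m n" "y \<in> pts m n" "g x = g y" unfolding ker_def by auto
      have "(Inl (g y), y) \<in> R" using gP[OF xy(2)] symR by (blast dest: symD)
      then show "(x,y) \<in> R" using gP[OF xy(1)] xy(3) trR by (metis transD)
    qed
  qed
  have gi: "\<forall>i\<in>{1..m}. g (Inl i) = i"
  proof
    fix i assume i: "i \<in> {1..m}"
    then have "Inl i \<in> pts m n" by (simp add: pts_def)
    then show "g (Inl i) = i" using gU i rfR by blast
  qed
  have im: "g ` (Inr ` {1..n}) = {1..m}"
  proof
    have "Inr ` {1..n} \<subseteq> pts m n" by (auto simp: pts_def)
    then show "g ` Inr ` {1..n} \<subseteq> {1..m}" using gP by blast
    show "{1..m} \<subseteq> g ` Inr ` {1..n}"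
    proof
      fix i assume i: "i \<in> {1..m}"
      then have xi: "Inl i \<in> pts m n" by (simp add: pts_def)
      then have "R `` {Inl i} \<in> pts m n // R" by (rule quotientI)
      from cl[OF this] have "R `` {Inl i} \<inter> Inr ` {1..n} \<noteq> {}" by blast
      then obtain j where j: "j \<in> {1..n}" "(Inl i, Inr j) \<in> R" by blast
      then have "Inr j \<in> pts m n" by (simp add: pts_def)
      moreover have "(Inr j, Inl i) \<in> R" using j(2) symR by (blast dest: symD)
      ultimately have "g (Inr j) = i" using gU i by blast
      then show "i \<in> g ` Inr ` {1..n}" using j by blast
    qed
  qed
  show ?thesis using Rk gi im gP by blast
qed


lemma id_circ: "in_FinCorel_circ n n (corel_id n)"
proof -
  have e: "corel_id n = ker (pts n n) idx" unfolding corel_id_def ker_def by simp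
  have "inj_on idx (Inl ` {1..n})" by (auto simp: inj_on_def)
  moreover have "idx ` (Inr ` {1..n}) = idx ` (Inl ` {1..n})"
    by (simp add: image_image)
  ultimately show ?thesis unfolding e by (rule kernel_circ)
qed

lemma sym_circ: "in_FinCorel_circ (m + n) (n + m) (corel_sym m n)"
proof -
  have e: "corel_sym m n = ker (pts (m + n) (n + m)) (sym_tgt m n)"
    unfolding corel_sym_def ker_def by simp
  have "inj_on (sym_tgt m n) (Inl ` {1..m+n})"
  proof (rule inj_onI)
    fix x y assume x: "x \<in> Inl ` {1..m+n}" and y: "y \<in> Inl ` {1..m+n}"
      and e: "sym_tgt m n x = sym_tgt m n y"
    from x obtain i where i: "x = Inl i" "i \<in> {1..m+n}" by blast
    from y obtain i' where i': "y = Inl i'" "i' \<in> {1..m+n}" by blast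
    have "sym_tgt m n (Inl i) = sym_tgt m n (Inl i')" using e i i' by simp
    then have "i = i'" using i(2) i'(2)
      by (cases "i \<le> m"; cases "i' \<le> m") simp_all
    then show "x = y" using i i' by simp
  qed
  moreover have "sym_tgt m n ` (Inr ` {1..n+m}) = sym_tgt m n ` (Inl ` {1..m+n})"
  proof
    show "sym_tgt m n ` Inr ` {1..n + m} \<subseteq> sym_tgt m n ` Inl ` {1..m + n}"
    proof
      fix z assume "z \<in> sym_tgt m n ` Inr ` {1..n + m}"
      then obtain j where j: "j \<in> {1..n+m}" "z = Inr j" by auto
      show "z \<in> sym_tgt m n ` Inl ` {1..m + n}"
      proof (cases "j \<le> n")
        case True
        then have "z = sym_tgt m n (Inl (j + m))" using j by simp
        moreover have "j + m \<in> {1..m+n}" using j True by simp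
        ultimately show ?thesis by blast
      next
        case False
        then have "z = sym_tgt m n (Inl (j - n))" using j by simp
        moreover have "j - n \<in> {1..m+n}" using j False by auto
        ultimately show ?thesis by blast
      qed
    qed
    show "sym_tgt m n ` Inl ` {1..m + n} \<subseteq> sym_tgt m n ` Inr ` {1..n + m}"
    proof
      fix z assume "z \<in> sym_tgt m n ` Inl ` {1..m + n}"
      then obtain i where i: "i \<in> {1..m+n}" "z = sym_tgt m n (Inl i)" by blast
      show "z \<in> sym_tgt m n ` Inr ` {1..n + m}"
      proof (cases "i \<le> m")
        case True
        then have "z = sym_tgt m n (Inr (n + i))" using i by simp
        moreover have "n + i \<in> {1..n+m}" using i True by simp
        ultimately show ?thesis by blast
      next
        case False
        then have "z = sym_tgt m n (Inr (i - m))" using i by simp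
        moreover have "i - m \<in> {1..n+m}" using i False by auto
        ultimately show ?thesis by blast
      qed
    qed
  qed
  ultimately show ?thesis unfolding e by (rule kernel_circ)
qed


fun unshift :: "nat \<Rightarrow> nat \<Rightarrow> point \<Rightarrow> point" where
  "unshift m n (Inl i) = Inl (i - m)" | "unshift m n (Inr j) = Inr (j - n)"

lemma pts_small: "x \<in> pts m n \<Longrightarrow> x \<in> pts (m + m') (n + n')"
  by (cases x) (auto simp: pts_def)

lemma pts_unshift: "x \<in> pts (m + m') (n + n') \<Longrightarrow> x \<notin> pts m n \<Longrightarrow>
   unshift m n x \<in> pts m' n' \<and> shift m n (unshift m n x) = x"
  by (cases x) (auto simp: pts_def image_iff)

lemma pts_shift: "a \<in> pts m' n' \<Longrightarrow>
   shift m n a \<in> pts (m + m') (n + n') \<and> shift m n a \<notin> pts m n \<and> unshift m n (shift m n a) = a"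
  by (cases a) (auto simp: pts_def)

lemma tensor_circ:
  assumes R: "in_FinCorel_circ m n R" and S: "in_FinCorel_circ m' n' S"
  shows "in_FinCorel_circ (m + m') (n + n') (corel_tensor m n R S)"
proof -
  obtain g1 where g1: "R = ker (pts m n) g1" "\<forall>i\<in>{1..m}. g1 (Inl i) = i"
     "g1 ` (Inr ` {1..n}) = {1..m}" "\<forall>x\<in>pts m n. g1 x \<in> {1..m}"
    using circ_ker[OF R] by blast
  obtain g2 where g2: "S = ker (pts m' n') g2" "\<forall>i\<in>{1..m'}. g2 (Inl i) = i"
     "g2 ` (Inr ` {1..n'}) = {1..m'}" "\<forall>x\<in>pts m' n'. g2 x \<in> {1..m'}"
    using circ_ker[OF S] by blast
  define h where "h x = (if x \<in> pts m n then g1 x else g2 (unshift m n x) + m)" for x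
  have hs: "h (shift m n a) = g2 a + m" if "a \<in> pts m' n'" for a
    using pts_shift[OF that] unfolding h_def by simp
  have T: "corel_tensor m n R S = ker (pts (m + m') (n + n')) h"
  proof (rule set_eqI, clarify)
    fix x y
    show "((x,y) \<in> corel_tensor m n R S) = ((x,y) \<in> ker (pts (m + m') (n + n')) h)"
    proof
      assume "(x,y) \<in> corel_tensor m n R S"
      then consider "(x,y) \<in> R" | a b where "(a,b) \<in> S" "x = shift m n a" "y = shift m n b"
        unfolding corel_tensor_def by auto
      then show "(x,y) \<in> ker (pts (m + m') (n + n')) h"
      proof cases
        case 1
        then have "x \<in> pts m n" "y \<in> pts m n" "g1 x = g1 y" using g1(1) unfolding ker_def by auto
        then show ?thesis using pts_small unfolding ker_def h_def by auto
      next
        case 2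
        then have ab: "a \<in> pts m' n'" "b \<in> pts m' n'" "g2 a = g2 b" using g2(1) unfolding ker_def by auto
        then show ?thesis using 2 hs[OF ab(1)] hs[OF ab(2)] pts_shift[OF ab(1)] pts_shift[OF ab(2)]
          unfolding ker_def by simp
      qed
    next
      assume "(x,y) \<in> ker (pts (m + m') (n + n')) h"
      then have xy: "x \<in> pts (m + m') (n + n')" "y \<in> pts (m + m') (n + n')" "h x = h y"
        unfolding ker_def by auto
      show "(x,y) \<in> corel_tensor m n R S"
      proof (cases "x \<in> pts m n")
        case xin: True
        show ?thesis
        proof (cases "y \<in> pts m n")
          case True
          then have "(x,y) \<in> R" using xin xy(3) g1(1) unfolding ker_def h_def by simp
          then show ?thesis unfolding corel_tensor_def by blast
        next
          case False
          have "h x \<le> m" using xin g1(4) unfolding h_def by simp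
          moreover have "h y > m"
          proof -
            have "g2 (unshift m n y) \<in> {1..m'}" using pts_unshift[OF xy(2) False] g2(4) by blast
            then show ?thesis using False unfolding h_def by simp
          qed
          ultimately show ?thesis using xy(3) by simp
        qed
      next
        case xout: False
        show ?thesis
        proof (cases "y \<in> pts m n")
          case True
          have "h y \<le> m" using True g1(4) unfolding h_def by simp
          moreover have "h x > m"
          proof -
            have "g2 (unshift m n x) \<in> {1..m'}" using pts_unshift[OF xy(1) xout] g2(4) by blast
            then show ?thesis using xout unfolding h_def by simp
          qed
          ultimately show ?thesis using xy(3) by simp
        next
          case False
          let ?a = "unshift m n x" and ?b = "unshift m n y"
          have a: "?a \<in> pts m' n'" "shift m n ?a = x" using pts_unshift[OF xy(1) xout] by auto
          have b: "?b \<in> pts m' n'" "shift m n ?b = y" using pts_unshift[OF xy(2) False] by auto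
          have "g2 ?a = g2 ?b" using xy(3) xout False unfolding h_def by simp
          then have "(?a, ?b) \<in> S" using a b g2(1) unfolding ker_def by simp
          then have "(shift m n ?a, shift m n ?b) \<in> corel_tensor m n R S"
            unfolding corel_tensor_def by force
          then show ?thesis using a b by simp
        qed
      qed
    qed
  qed
  have hi: "h (Inl i) = i" if "i \<in> {1..m+m'}" for i
  proof (cases "i \<le> m")
    case True
    then have "Inl i \<in> pts m n" using that by (simp add: pts_def)
    then show ?thesis using g1(2) True that unfolding h_def by simp
  next
    case False
    then have "Inl (i - m) \<in> pts m' n'" using that by (auto simp: pts_def image_iff)
    then have "h (shift m n (Inl (i - m))) = g2 (Inl (i - m)) + m" by (rule hs)
    moreover have "i - m \<in> {1..m'}" using False that by auto
    ultimately show ?thesis using g2(2) False by simp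
  qed
  have "inj_on h (Inl ` {1..m+m'})"
  proof (rule inj_onI)
    fix x y assume x: "x \<in> Inl ` {1..m+m'}" and y: "y \<in> Inl ` {1..m+m'}" and e: "h x = h y"
    from x obtain i where i: "x = Inl i" "i \<in> {1..m+m'}" by blast
    from y obtain i' where i': "y = Inl i'" "i' \<in> {1..m+m'}" by blast
    show "x = y" using e i i' hi by simp
  qed
  moreover have "h ` (Inr ` {1..n+n'}) = h ` (Inl ` {1..m+m'})"
  proof -
    have A: "h ` (Inl ` {1..m+m'}) = {1..m+m'}"
    proof -
      have "h ` (Inl ` {1..m+m'}) = (\<lambda>i. h (Inl i)) ` {1..m+m'}" by (simp add: image_image)
      also have "\<dots> = id ` {1..m+m'}" using hi by (intro image_cong) auto
      finally show ?thesis by simp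
    qed
    have "h ` (Inr ` {1..n+n'}) = {1..m+m'}"
    proof
      show "h ` Inr ` {1..n + n'} \<subseteq> {1..m + m'}"
      proof
        fix z assume "z \<in> h ` Inr ` {1..n + n'}"
        then obtain j where j: "j \<in> {1..n+n'}" "z = h (Inr j)" by blast
        show "z \<in> {1..m+m'}"
        proof (cases "j \<le> n")
          case True
          then have "Inr j \<in> pts m n" using j by (simp add: pts_def)
          then show ?thesis using g1(4) j unfolding h_def by auto
        next
          case False
          then have "Inr (j - n) \<in> pts m' n'" using j by (auto simp: pts_def image_iff)
          moreover have "shift m n (Inr (j - n)) = Inr j" using False by simp
          ultimately have "z = g2 (Inr (j - n)) + m" using hs[of "Inr (j - n)"] j by simp
          moreover have "g2 (Inr (j - n)) \<in> {1..m'}" using g2(4) \<open>Inr (j - n) \<in> pts m' n'\<close> by blast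
          ultimately show ?thesis by simp
        qed
      qed
      show "{1..m + m'} \<subseteq> h ` Inr ` {1..n + n'}"
      proof
        fix i assume i: "i \<in> {1..m+m'}"
        show "i \<in> h ` Inr ` {1..n + n'}"
        proof (cases "i \<le> m")
          case True
          then have "i \<in> g1 ` (Inr ` {1..n})" using g1(3) i by simp
          then obtain j where j: "j \<in> {1..n}" "g1 (Inr j) = i" by blast
          then have "Inr j \<in> pts m n" by (simp add: pts_def)
          then have "h (Inr j) = i" using j unfolding h_def by simp
          moreover have "j \<in> {1..n+n'}" using j by simp
          ultimately show ?thesis by blast
        next
          case False
          then have "i - m \<in> g2 ` (Inr ` {1..n'})" using g2(3) i by auto
          then obtain j where j: "j \<in> {1..n'}" "g2 (Inr j) = i - m" by auto
          then have "Inr j \<in> pts m' n'" by (simp add: pts_def)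
          then have "h (shift m n (Inr j)) = g2 (Inr j) + m" by (rule hs)
          then have "h (shift m n (Inr j)) = i" using False j by simp
          moreover have "j + n \<in> {1..n+n'}" using j by simp
          ultimately show ?thesis by force
        qed
      qed
    qed
    with A show ?thesis by simp
  qed
  ultimately show ?thesis unfolding T by (rule kernel_circ)
qed


lemma comp_circ:
  assumes R: "in_FinCorel_circ m n R" and S: "in_FinCorel_circ n p S"
  shows "in_FinCorel_circ m p (corel_comp m n p R S)"
proof -
  obtain g1 where g1: "R = ker (pts m n) g1" "\<forall>i\<in>{1..m}. g1 (Inl i) = i"
     "g1 ` (Inr ` {1..n}) = {1..m}" "\<forall>x\<in>pts m n. g1 x \<in> {1..m}"
    using circ_ker[OF R] by blast
  obtain g2 where g2: "S = ker (pts n p) g2" "\<forall>i\<in>{1..n}. g2 (Inl i) = i"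
     "g2 ` (Inr ` {1..p}) = {1..n}" "\<forall>x\<in>pts n p. g2 x \<in> {1..n}"
    using circ_ker[OF S] by blast
  define lab :: "nat \<times> nat \<Rightarrow> nat" where
    "lab = (\<lambda>(c,i). if c = 0 then i else if c = 1 then g1 (Inr i) else g1 (Inr (g2 (Inr i))))"
  have lab0: "lab (0, i) = i" and lab1: "lab (1, j) = g1 (Inr j)"
    and lab2: "lab (2, k) = g1 (Inr (g2 (Inr k)))" for i j k
    unfolding lab_def by simp_all
  define A where "A = pts3 m n p"
  define X where "X = (\<lambda>(a, b). (emb_left a, emb_left b)) ` R \<union>
             (\<lambda>(a, b). (emb_right a, emb_right b)) ` S"
  define E where "E = X \<union> X\<inverse> \<union> Id_on A"
  have L1: "lab (emb_left a) = g1 a" if "a \<in> pts m n" for a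
  proof (cases a)
    case (Inl i)
    then have "i \<in> {1..m}" using that by (auto simp: pts_def)
    then show ?thesis using Inl g1(2) lab0 by simp
  next
    case (Inr j)
    then show ?thesis using lab1 by simp
  qed
  have L2: "lab (emb_right b) = g1 (Inr (g2 b))" if "b \<in> pts n p" for b
  proof (cases b)
    case (Inl j)
    then have "j \<in> {1..n}" using that by (auto simp: pts_def)
    then show ?thesis using Inl g2(2) lab1 by simp
  next
    case (Inr k)
    then show ?thesis using lab2 by simp
  qed
  have XK: "lab u = lab v" if uv: "(u,v) \<in> X" for u v
  proof -
    from uv have "(u,v) \<in> (\<lambda>(a, b). (emb_left a, emb_left b)) ` R \<union>
      (\<lambda>(a, b). (emb_right a, emb_right b)) ` S" unfolding X_def .
    then show ?thesis
    proof (rule UnE)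
      assume "(u,v) \<in> (\<lambda>(a, b). (emb_left a, emb_left b)) ` R"
      then obtain ab where ab: "ab \<in> R" "(u,v) = (\<lambda>(a, b). (emb_left a, emb_left b)) ab"
        by (rule imageE)
      obtain a b where abe: "ab = (a,b)" by (cases ab)
      have uv': "u = emb_left a" "v = emb_left b" using ab(2) abe by simp_all
      have "(a,b) \<in> ker (pts m n) g1" using ab(1) abe g1(1) by simp
      then have "a \<in> pts m n" "b \<in> pts m n" "g1 a = g1 b" unfolding ker_def by simp_all
      then show ?thesis using uv' L1 by simp
    next
      assume "(u,v) \<in> (\<lambda>(a, b). (emb_right a, emb_right b)) ` S"
      then obtain ab where ab: "ab \<in> S" "(u,v) = (\<lambda>(a, b). (emb_right a, emb_right b)) ab"
        by (rule imageE)
      obtain a b where abe: "ab = (a,b)" by (cases ab)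
      have uv': "u = emb_right a" "v = emb_right b" using ab(2) abe by simp_all
      have "(a,b) \<in> ker (pts n p) g2" using ab(1) abe g2(1) by simp
      then have "a \<in> pts n p" "b \<in> pts n p" "g2 a = g2 b" unfolding ker_def by simp_all
      then show ?thesis using uv' L2 by simp
    qed
  qed
  have EK: "lab u = lab v" if "(u,v) \<in> E" for u v
  proof -
    from that have "(u,v) \<in> X \<or> (u,v) \<in> X\<inverse> \<or> (u,v) \<in> Id_on A"
      unfolding E_def by blast
    then show ?thesis
    proof (elim disjE)
      assume "(u,v) \<in> X" then show ?thesis by (rule XK)
    next
      assume "(u,v) \<in> X\<inverse>" then have "(v,u) \<in> X" by (rule converseD)
      then show ?thesis using XK[of v u] by simp
    next
      assume "(u,v) \<in> Id_on A" then have "u = v" by (rule Id_onE) simp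
      then show ?thesis by simp
    qed
  qed
  have starK: "lab u = lab v" if "(u,v) \<in> E\<^sup>*" for u v
    using that
  proof (induction rule: rtrancl_induct)
    case base then show ?case by simp
  next
    case (step y z) then show ?case using EK[of y z] by simp
  qed
  have XE: "(u,v) \<in> E\<^sup>* \<and> (v,u) \<in> E\<^sup>*" if "(u,v) \<in> X" for u v
  proof -
    have "(u,v) \<in> E" "(v,u) \<in> E" using that unfolding E_def by blast+
    then show ?thesis by blast
  qed
  have reach: "(u, (0, lab u)) \<in> E\<^sup>* \<and> ((0, lab u), u) \<in> E\<^sup>*" if u: "u \<in> A" for u
  proof -
    obtain c t where ct: "u = (c, t)" by (cases u)
    have X1: "((0, g1 (Inr j)), (1, j)) \<in> X" if j: "j \<in> {1..n}" for j
    proof -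
      have "Inr j \<in> pts m n" using j by (simp add: pts_def)
      then have gi: "g1 (Inr j) \<in> {1..m}" using g1(4) by blast
      then have "Inl (g1 (Inr j)) \<in> pts m n" by (simp add: pts_def)
      then have "(Inl (g1 (Inr j)), Inr j) \<in> R"
        using \<open>Inr j \<in> pts m n\<close> gi g1(1,2) unfolding ker_def by simp
      then have "(emb_left (Inl (g1 (Inr j))), emb_left (Inr j)) \<in> (\<lambda>(a, b). (emb_left a, emb_left b)) ` R"
        by (rule image_eqI[rotated]) simp
      then have "(emb_left (Inl (g1 (Inr j))), emb_left (Inr j)) \<in> X"
        unfolding X_def by blast
      then show ?thesis by simp
    qed
    consider "c = 0" "t \<in> {1..m}" | "c = 1" "t \<in> {1..n}" | "c = 2" "t \<in> {1..p}"
      using u ct unfolding A_def pts3_def by auto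
    then show ?thesis
    proof cases
      case 1
      then show ?thesis using ct lab0 by simp
    next
      case 2
      then show ?thesis using XE[OF X1[OF 2(2)]] ct lab1 by simp
    next
      case 3
      have "Inr t \<in> pts n p" using 3 by (simp add: pts_def)
      then have gj: "g2 (Inr t) \<in> {1..n}" using g2(4) by blast
      then have "Inl (g2 (Inr t)) \<in> pts n p" by (simp add: pts_def)
      then have "(Inl (g2 (Inr t)), Inr t) \<in> S"
        using \<open>Inr t \<in> pts n p\<close> gj g2(1,2) unfolding ker_def by simp
      then have "(emb_right (Inl (g2 (Inr t))), emb_right (Inr t)) \<in> (\<lambda>(a, b). (emb_right a, emb_right b)) ` S"
        by (rule image_eqI[rotated]) simp
      then have "(emb_right (Inl (g2 (Inr t))), emb_right (Inr t)) \<in> X"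
        unfolding X_def by blast
      then have "((1, g2 (Inr t)), (2, t)) \<in> X" by simp
      from XE[OF this] XE[OF X1[OF gj]]
      have "((2, t), (0, g1 (Inr (g2 (Inr t))))) \<in> E\<^sup>*" "((0, g1 (Inr (g2 (Inr t)))), (2, t)) \<in> E\<^sup>*"
        by (blast intro: rtrancl_trans)+
      then show ?thesis using ct 3 lab2 by simp
    qed
  qed
  have GE: "gen_equiv A X = E\<^sup>* \<inter> (A \<times> A)" unfolding gen_equiv_def E_def by simp
  have G': "((u,v) \<in> gen_equiv A X) = (u \<in> A \<and> v \<in> A \<and> lab u = lab v)" for u v
    proof
      assume "(u,v) \<in> gen_equiv A X"
      then have "(u,v) \<in> E\<^sup>*" "u \<in> A" "v \<in> A" unfolding GE by blast+
      then show "u \<in> A \<and> v \<in> A \<and> lab u = lab v" using starK by blast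
    next
      assume h: "u \<in> A \<and> v \<in> A \<and> lab u = lab v"
      then have "(u, (0, lab u)) \<in> E\<^sup>*" "((0, lab v), v) \<in> E\<^sup>*" using reach by blast+
      then have "(u, (0, lab v)) \<in> E\<^sup>*" "((0, lab v), v) \<in> E\<^sup>*" using h by simp_all
      then have "(u,v) \<in> E\<^sup>*" by (rule rtrancl_trans)
      then show "(u,v) \<in> gen_equiv A X" using h unfolding GE by blast
    qed
  have G: "gen_equiv A X = {(u,v). u \<in> A \<and> v \<in> A \<and> lab u = lab v}"
    by (rule set_eqI) (auto simp: G')
  have outA: "emb_outer x \<in> A" if "x \<in> pts m p" for x
    using that unfolding A_def pts3_def pts_def by (cases x) auto
  have C: "corel_comp m n p R S = ker (pts m p) (\<lambda>x. lab (emb_outer x))"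
  proof -
    have "corel_comp m n p R S = {(x, y). x \<in> pts m p \<and> y \<in> pts m p \<and>
        (emb_outer x, emb_outer y) \<in> gen_equiv A X}"
      unfolding corel_comp_def A_def X_def by simp
    also have "\<dots> = ker (pts m p) (\<lambda>x. lab (emb_outer x))"
      unfolding G ker_def using outA by blast
    finally show ?thesis .
  qed
  have hi: "lab (emb_outer (Inl i)) = i" for i using lab0 by simp
  have "inj_on (\<lambda>x. lab (emb_outer x)) (Inl ` {1..m})"
    by (rule inj_onI) (auto simp: lab0)
  moreover have "(\<lambda>x. lab (emb_outer x)) ` (Inr ` {1..p}) = (\<lambda>x. lab (emb_outer x)) ` (Inl ` {1..m})"
  proof -
    have "(\<lambda>x. lab (emb_outer x)) ` (Inl ` {1..m}) = {1..m}"
      by (simp add: image_image lab0)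
    moreover have "(\<lambda>x. lab (emb_outer x)) ` (Inr ` {1..p}) = g1 ` Inr ` (g2 ` Inr ` {1..p})"
      by (simp add: image_image lab2)
    ultimately show ?thesis using g1(3) g2(3) by simp
  qed
  ultimately show ?thesis unfolding C by (rule kernel_circ)
qed

theorem proposition2p12:
  shows "(\<forall>m n p R S. in_FinCorel_circ m n R \<and> in_FinCorel_circ n p S \<longrightarrow>
            in_FinCorel_circ m p (corel_comp m n p R S))
       \<and> (\<forall>m n m' n' R S. in_FinCorel_circ m n R \<and> in_FinCorel_circ m' n' S \<longrightarrow>
            in_FinCorel_circ (m + m') (n + n') (corel_tensor m n R S))
       \<and> (\<forall>n. in_FinCorel_circ n n (corel_id n))
       \<and> (\<forall>m n. in_FinCorel_circ (m + n) (n + m) (corel_sym m n))"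
  using comp_circ tensor_circ id_circ sym_circ by blast

end
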